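(* There is a constant $C$ such that for every sufficiently large $n$ there exists a $2$-planar graph of girth $5$ on $n$ vertices with at least $\left(2+\frac{2}{7}\right)n-C$ edges.
   Context: All graphs are finite and simple. A graph is $k$-planar if it admits a drawing in the plane in which every edge is crossed at most $k$ times. The girth of a graph is the length of its shortest cycle. (The paper states the edge count as $(2+\frac27)n-O(1)$.) *)

theory Defs
  imports "HOL-Analysis.Analysis"
begin

definition simple_graph :: "'a set \<Rightarrow> 'a set set \<Rightarrow> bool" where
  "simple_graph V E \<longleftrightarrow> finite V \<and> (\<forall>e\<in>E. e \<subseteq> V \<and> card e = 2)"

definition has_cycle_of_length :: "'a set \<Rightarrow> 'a set set \<Rightarrow> nat \<Rightarrow> bool" where
  "has_cycle_of_length V E k \<longleftrightarrow> 3 \<le> k \<and>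
     (\<exists>xs. length xs = k \<and> distinct xs \<and> set xs \<subseteq> V \<and>
        (\<forall>i<k. {xs ! i, xs ! ((i + 1) mod k)} \<in> E))"

definition girth :: "'a set \<Rightarrow> 'a set set \<Rightarrow> enat" where
  "girth V E = (if \<exists>k. has_cycle_of_length V E k
                then enat (LEAST k. has_cycle_of_length V E k) else \<infinity>)"

definition curve_interior :: "(real \<Rightarrow> complex) \<Rightarrow> complex set" where
  "curve_interior g = g ` {0<..<1}"

text \<open>Every common interior point of two distinct edges is a crossing.\<close>
definition drawing :: "'a set \<Rightarrow> 'a set set \<Rightarrow> ('a \<Rightarrow> complex) \<Rightarrow> ('a set \<Rightarrow> real \<Rightarrow> complex) \<Rightarrow> bool" where
  "drawing V E pos curve \<longleftrightarrow> inj_on pos V \<and>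
     (\<forall>e\<in>E. arc (curve e) \<and> {pathstart (curve e), pathfinish (curve e)} = pos ` e \<and>
             pos ` V \<inter> curve_interior (curve e) = {}) \<and>
     (\<forall>e\<in>E. \<forall>f\<in>E. e \<noteq> f \<longrightarrow> finite (curve_interior (curve e) \<inter> curve_interior (curve f)))"

definition crossings_on_edge :: "'a set set \<Rightarrow> ('a set \<Rightarrow> real \<Rightarrow> complex) \<Rightarrow> 'a set \<Rightarrow> nat" where
  "crossings_on_edge E curve e =
     (\<Sum>f\<in>E - {e}. card (curve_interior (curve e) \<inter> curve_interior (curve f)))"

definition k_planar :: "nat \<Rightarrow> 'a set \<Rightarrow> 'a set set \<Rightarrow> bool" where
  "k_planar k V E \<longleftrightarrow> (\<exists>pos curve. drawing V E pos curve \<and>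
     (\<forall>e\<in>E. crossings_on_edge E curve e \<le> k))"

end

theory Submission
  imports Defs
begin

definition Wr :: "real \<Rightarrow> real \<Rightarrow> complex" where
  "Wr X Y = Complex X (2*pi*Y/5)"

lemma exp_Wr_eq: "exp (Wr X Y) = exp (Wr X' Y') \<longleftrightarrow> X = X' \<and> (\<exists>j::int. Y = Y' + 5*j)"
proof
  assume "exp (Wr X Y) = exp (Wr X' Y')"
  then obtain n::int where n: "Wr X Y = Wr X' Y' + (of_int (2 * n) * pi) * \<i>"
    by (auto simp: exp_eq)
  hence "X = X'" and "2*pi*Y/5 = 2*pi*Y'/5 + 2*n*pi"
    by (auto simp: Wr_def complex_eq_iff)
  hence "pi * (2*Y) = pi * (2*Y' + 10*n)" by (simp add: algebra_simps)
  hence "2*Y = 2*Y' + real_of_int (10*n)" using pi_neq_zero by simp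
  hence "Y = Y' + 5*n" by simp
  thus "X = X' \<and> (\<exists>j::int. Y = Y' + 5*j)" using \<open>X = X'\<close> by (intro conjI exI[of _ n]) auto
next
  assume "X = X' \<and> (\<exists>j::int. Y = Y' + 5*j)"
  then obtain j::int where "X = X'" "Y = Y' + 5 * of_int j" by blast
  hence "Wr X Y = Wr X' Y' + (of_int (2 * j) * pi) * \<i>"
    by (simp add: Wr_def complex_eq_iff field_simps)
  thus "exp (Wr X Y) = exp (Wr X' Y')" by (auto simp: exp_eq)
qed

lemma lp_Wr: "linepath (Wr a b) (Wr c d) s = Wr ((1-s)*a + s*c) ((1-s)*b + s*d)"
  by (simp add: linepath_def Wr_def complex_eq_iff scaleR_conv_of_real field_simps)


definition vecs :: "(int \<times> int) list" where
  "vecs = [(0,1),(1,-1),(2,1),(1,0),(2,-1)]"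

definition vid :: "int \<Rightarrow> int \<Rightarrow> nat" where "vid x y = nat (5*x + y mod 5)"

definition pos :: "nat \<Rightarrow> complex" where
  "pos v = exp (Wr (real (v div 5)) (real (v mod 5)))"

lemma vid_int: "0 \<le> x \<Longrightarrow> int (vid x y) = 5*x + y mod 5"
  by (simp add: vid_def)

lemma vid_div: "0 \<le> x \<Longrightarrow> int (vid x y div 5) = x"
  by (simp add: zdiv_int vid_int)

lemma vid_mod: "0 \<le> x \<Longrightarrow> int (vid x y mod 5) = y mod 5"
  by (simp add: zmod_int vid_int)

lemma pos_vid: assumes "0 \<le> x" shows "pos (vid x y) = exp (Wr (of_int x) (of_int y))"
proof -
  have a0: "real_of_int (int (vid x y div 5)) = of_int x" using vid_div[OF assms, of y] by simp
  have a: "real (vid x y div 5) = of_int x" using a0 by simp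
  have b0: "real_of_int (int (vid x y mod 5)) = of_int (y mod 5)" using vid_mod[OF assms, of y] by simp
  have b: "real (vid x y mod 5) = of_int (y mod 5)" using b0 by simp
  have c0: "y mod 5 = y + 5 * (- (y div 5))" using div_mult_mod_eq[of y 5] by linarith
  have "of_int (y mod 5) = (of_int (y + 5 * (- (y div 5)))::real)" using c0 by simp
  hence "of_int (y mod 5) = (of_int y::real) + 5 * of_int (- (y div 5))" by simp
  thus ?thesis unfolding pos_def a b exp_Wr_eq by blast
qed

definition crv :: "int \<times> int \<times> (int \<times> int) \<Rightarrow> real \<Rightarrow> complex" where
  "crv t = (case t of (x,y,d) \<Rightarrow> exp \<circ> linepath (Wr (of_int x) (of_int y))
        (Wr (of_int (x + fst d)) (of_int (y + snd d))))"

lemma crv_pt: "crv (x,y,d) s = exp (Wr (of_int x + s * of_int (fst d)) (of_int y + s * of_int (snd d)))"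
  by (simp add: crv_def lp_Wr algebra_simps)

lemma crv_int: "z \<in> curve_interior (crv (x,y,d)) \<longleftrightarrow>
   (\<exists>s. 0<s \<and> s<1 \<and> z = exp (Wr (of_int x + s * of_int (fst d)) (of_int y + s * of_int (snd d))))"
  by (auto simp: curve_interior_def crv_pt)

lemma int_small: "\<bar>real_of_int j\<bar> < 1 \<Longrightarrow> j = 0"
  by linarith

lemma int_01: assumes "0 < real_of_int m" "real_of_int m < 1" shows False
proof -
  from assms have "0 < m" "m < 1" by simp_all
  thus False by simp
qed

lemma vecs_cases: "d \<in> set vecs \<Longrightarrow> d = (0,1) \<or> d = (1,-1) \<or> d = (2,1) \<or> d = (1,0) \<or> d = (2,-1)"
  by (auto simp: vecs_def)

lemma arc_crv: assumes "d \<in> set vecs" shows "arc (crv (x,y,d))"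
  unfolding arc_def
proof
  show "path (crv (x, y, d))" unfolding crv_def
    unfolding prod.case by (intro path_continuous_image path_linepath continuous_on_exp continuous_on_id)
  show "inj_on (crv (x, y, d)) {0..1}"
  proof (rule inj_onI)
    fix s s' assume s: "s \<in> {0..1}" "s' \<in> {0..1}" and eq: "crv (x, y, d) s = crv (x, y, d) s'"
    then obtain j::int where e1: "of_int x + s * of_int (fst d) = of_int x + s' * of_int (fst d)"
      and e2: "of_int y + s * of_int (snd d) = of_int y + s' * of_int (snd d) + 5 * (of_int j::real)"
      unfolding crv_pt exp_Wr_eq by blast
    have e3: "(s - s') * of_int (snd d) = 5 * of_int j" using e2 by (simp add: algebra_simps)
    have e4: "(s - s') * of_int (fst d) = 0" using e1 by (simp add: algebra_simps)
    from vecs_cases[OF assms] show "s = s'"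
    proof (elim disjE)
      assume d: "d = (0,1)"
      hence "-1 < real_of_int j \<and> real_of_int j < 1" using e3 s by simp
      hence "j = 0" by (intro int_small) linarith
      thus "s = s'" using e3 d by simp
    next
      assume d: "d = (1,-1)"
      thus "s = s'" using e4 by simp
    next
      assume d: "d = (2,1)"
      thus "s = s'" using e4 by simp
    next
      assume d: "d = (1,0)"
      thus "s = s'" using e4 by simp
    next
      assume d: "d = (2,-1)"
      thus "s = s'" using e4 by simp
    qed
  qed
qed

lemma vert_avoid: assumes "d \<in> set vecs" shows "pos v \<notin> curve_interior (crv (x,y,d))"
proof
  assume "pos v \<in> curve_interior (crv (x,y,d))"
  then obtain s where s: "0<s" "s<1" and
    "exp (Wr (real (v div 5)) (real (v mod 5))) = exp (Wr (of_int x + s * of_int (fst d)) (of_int y + s * of_int (snd d)))"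
    unfolding crv_int pos_def by blast
  then obtain j::int where e1: "real (v div 5) = of_int x + s * of_int (fst d)"
      and e2: "real (v mod 5) = of_int y + s * of_int (snd d) + 5 * (of_int j::real)"
    unfolding exp_Wr_eq by blast
  have e1': "of_int (int (v div 5) - x) = s * of_int (fst d)" using e1 by simp
  have e2': "of_int (int (v mod 5) - y - 5 * j) = s * of_int (snd d)" using e2 by simp
  from vecs_cases[OF assms] show False
  proof (elim disjE)
    assume "d = (1,0)" thus False using e1' s by (intro int_01[of "int (v div 5) - x"]) simp_all
  next
    assume "d = (0,1)" thus False using e2' s by (intro int_01[of "int (v mod 5) - y - 5 * j"]) simp_all
  next
    assume "d = (2,1)" thus False using e2' s by (intro int_01[of "int (v mod 5) - y - 5 * j"]) simp_all
  next
    assume "d = (1,-1)" hence "of_int (-(int (v mod 5) - y - 5 * j)) = s" using e2' by simp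
    thus False using s by (intro int_01[of "-(int (v mod 5) - y - 5 * j)"]) simp_all
  next
    assume "d = (2,-1)" hence "of_int (-(int (v mod 5) - y - 5 * j)) = s" using e2' by simp
    thus False using s by (intro int_01[of "-(int (v mod 5) - y - 5 * j)"]) simp_all
  qed
qed

definition T :: "int \<Rightarrow> (int \<times> int) list" where
 "T c = (if c = 0 then [(0,1),(1,-1),(2,1)] else if c = 1 then [(1,-1),(1,0),(2,1)]
   else if c = 2 then [(1,0),(2,-1),(2,1)] else if c = 3 then [(2,-1)]
   else if c = 4 then [(1,-1),(2,1)] else if c = 5 then [(1,0),(2,1)] else [(0,1),(2,1)])"

definition CL :: "int \<Rightarrow> int \<times> int \<Rightarrow> (int \<times> int \<times> (int \<times> int)) list" where
 "CL c d = (if c = 0 then (if d = (0,1) then [(-1,0,(2,1))] else if d = (1,-1) then [(-1,-1,(2,1)),(0,-1,(2,1))]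
             else [(0,1,(1,-1)),(1,1,(1,-1))])
   else if c = 1 then (if d = (1,-1) then [(-1,-1,(2,1)),(0,-1,(2,1))] else if d = (1,0) then []
             else [(0,1,(1,-1)),(1,1,(2,-1))])
   else if c = 2 then (if d = (1,0) then [] else if d = (2,-1) then [(-1,-1,(2,1)),(0,-1,(2,1))]
             else [(0,1,(2,-1)),(1,1,(2,-1))])
   else if c = 3 then [(-1,-1,(2,1)),(1,-1,(2,1))]
   else if c = 4 then (if d = (1,-1) then [(0,-1,(2,1))] else [(-1,1,(2,-1)),(0,1,(1,-1))])
   else if c = 5 then (if d = (1,0) then [] else [(1,0,(0,1))])
   else (if d = (0,1) then [(-1,0,(2,1))] else [(1,0,(0,1)),(1,1,(1,-1))]))"

definition crs :: "int \<times> int \<Rightarrow> int \<times> int \<Rightarrow> int" where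
  "crs u v = fst u * snd v - snd u * fst v"

definition stest :: "int \<times> int \<Rightarrow> int \<times> int \<Rightarrow> int \<times> int \<Rightarrow> bool" where
 "stest w d e = (let den = crs d e; a = crs w e; b = crs w d in
    if den \<noteq> 0 then (if den > 0 then 0 < a \<and> a < den \<and> 0 < b \<and> b < den
                     else den < a \<and> a < 0 \<and> den < b \<and> b < 0)
    else (e = d \<longrightarrow> (crs w d = 0 \<and> \<bar>fst w * fst d + snd w * snd d\<bar> < fst d * fst d + snd d * snd d)))"

definition enumcheck :: bool where
 "enumcheck = list_all (\<lambda>c. list_all (\<lambda>d. length (CL c d) \<le> 2 \<and>
     list_all (\<lambda>(a,b,e). crs d e \<noteq> 0) (CL c d) \<and>
     list_all (\<lambda>a. list_all (\<lambda>b. list_all (\<lambda>e.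
        stest (a,b) d e \<longrightarrow> ((a,b,e) = (0,0,d) \<or> (a,b,e) \<in> set (CL c d)))
      (T ((c + a) mod 7))) [-1,0,1]) [-1,0,1]) (T c)) [0..6]"

lemma enumcheck: enumcheck
  unfolding enumcheck_def by code_simp

lemma T_vecs: "d \<in> set (T c) \<Longrightarrow> d \<in> set vecs"
  by (auto simp: T_def vecs_def split: if_splits)

definition smeet :: "int \<times> int \<Rightarrow> int \<times> int \<Rightarrow> int \<times> int \<Rightarrow> int \<times> int \<Rightarrow> bool" where
 "smeet p d q e \<longleftrightarrow> (\<exists>t s::real. 0<t \<and> t<1 \<and> 0<s \<and> s<1 \<and>
    of_int (fst p) + t * of_int (fst d) = of_int (fst q) + s * of_int (fst e) \<and>
    of_int (snd p) + t * of_int (snd d) = of_int (snd q) + s * of_int (snd e))"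

lemma meet_t:
  assumes "of_int a = t * of_int (fst d) - s * of_int (fst e)"
      and "of_int b = t * of_int (snd d) - s * of_int (snd e)"
  shows "(of_int (crs (a,b) e)::real) = t * of_int (crs d e)"
    and "(of_int (crs (a,b) d)::real) = s * of_int (crs d e)"
proof -
  have "(of_int (crs (a,b) e)::real) = of_int a * of_int (snd e) - of_int b * of_int (fst e)"
    by (simp add: crs_def)
  also have "\<dots> = t * of_int (crs d e)" unfolding assms by (simp add: crs_def algebra_simps)
  finally show "(of_int (crs (a,b) e)::real) = t * of_int (crs d e)" .
  have "(of_int (crs (a,b) d)::real) = of_int a * of_int (snd d) - of_int b * of_int (fst d)"
    by (simp add: crs_def)
  also have "\<dots> = s * of_int (crs d e)" unfolding assms by (simp add: crs_def algebra_simps)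
  finally show "(of_int (crs (a,b) d)::real) = s * of_int (crs d e)" .
qed

lemma frac_bounds:
  fixes t D A :: real
  assumes "0 < t" "t < 1" "A = t * D" "D \<noteq> 0"
  shows "(D > 0 \<longrightarrow> 0 < A \<and> A < D) \<and> (\<not> D > 0 \<longrightarrow> D < A \<and> A < 0)"
proof (cases "D > 0")
  case True
  have "0 < t * D" using assms True by simp
  moreover have "t * D < 1 * D" using assms True by (intro mult_strict_right_mono) auto
  ultimately show ?thesis using assms True by simp
next
  case False
  hence D: "D < 0" using assms by simp
  have "t * D < 0" using assms D by (simp add: mult_pos_neg)
  moreover have "1 * D < t * D" using assms D by (intro mult_strict_right_mono_neg) auto
  ultimately show ?thesis using assms False by simp
qed

lemma smeet_stest:
  assumes m: "smeet p d q e" and d0: "d \<noteq> (0,0)"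
  shows "stest (fst q - fst p, snd q - snd p) d e"
proof -
  obtain t s :: real where ts: "0<t" "t<1" "0<s" "s<1"
    and e1: "of_int (fst p) + t * of_int (fst d) = of_int (fst q) + s * of_int (fst e)"
    and e2: "of_int (snd p) + t * of_int (snd d) = of_int (snd q) + s * of_int (snd e)"
    using m unfolding smeet_def by blast
  define a where "a = fst q - fst p"
  define b where "b = snd q - snd p"
  have ea: "of_int a = t * of_int (fst d) - s * of_int (fst e)" using e1 by (simp add: a_def)
  have eb: "of_int b = t * of_int (snd d) - s * of_int (snd e)" using e2 by (simp add: b_def)
  note M = meet_t[OF ea eb]
  show ?thesis
  proof (cases "crs d e = 0")
    case False
    have F1: "(real_of_int (crs d e) > 0 \<longrightarrow> 0 < real_of_int (crs (a,b) e) \<and> real_of_int (crs (a,b) e) < real_of_int (crs d e)) \<and>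
          (\<not> real_of_int (crs d e) > 0 \<longrightarrow> real_of_int (crs d e) < real_of_int (crs (a,b) e) \<and> real_of_int (crs (a,b) e) < 0)"
      using frac_bounds[OF ts(1,2) M(1)] False by simp
    have F2: "(real_of_int (crs d e) > 0 \<longrightarrow> 0 < real_of_int (crs (a,b) d) \<and> real_of_int (crs (a,b) d) < real_of_int (crs d e)) \<and>
          (\<not> real_of_int (crs d e) > 0 \<longrightarrow> real_of_int (crs d e) < real_of_int (crs (a,b) d) \<and> real_of_int (crs (a,b) d) < 0)"
      using frac_bounds[OF ts(3,4) M(2)] False by simp
    have "(crs d e > 0 \<longrightarrow> 0 < crs (a,b) e \<and> crs (a,b) e < crs d e \<and> 0 < crs (a,b) d \<and> crs (a,b) d < crs d e) \<and>
          (\<not> crs d e > 0 \<longrightarrow> crs d e < crs (a,b) e \<and> crs (a,b) e < 0 \<and> crs d e < crs (a,b) d \<and> crs (a,b) d < 0)"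
      using F1 F2 unfolding of_int_less_iff of_int_0_less_iff of_int_less_0_iff by blast
    thus ?thesis using False unfolding stest_def a_def b_def Let_def by auto
  next
    case True
    show ?thesis
    proof (cases "e = d")
      case False thus ?thesis using True unfolding stest_def Let_def by simp
    next
      case ed: True
      have ea': "of_int a = (t - s) * of_int (fst d)" using ea ed by (simp add: algebra_simps)
      have eb': "of_int b = (t - s) * of_int (snd d)" using eb ed by (simp add: algebra_simps)
      have c0: "real_of_int (crs (a,b) d) = 0"
      proof -
        have "real_of_int (crs (a,b) d) = of_int a * of_int (snd d) - of_int b * of_int (fst d)"
          by (simp add: crs_def)
        also have "\<dots> = 0" unfolding ea' eb' by (simp add: algebra_simps)
        finally show ?thesis .
      qed
      define N where "N = fst d * fst d + snd d * snd d"
      have Npos: "N > 0" using d0 unfolding N_def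
        by (cases d) (simp add: sum_squares_gt_zero_iff)
      have "real_of_int (a * fst d + b * snd d) = of_int a * of_int (fst d) + of_int b * of_int (snd d)"
        by simp
      also have "\<dots> = (t - s) * of_int N" unfolding ea' eb' by (simp add: N_def algebra_simps)
      finally have "real_of_int (a * fst d + b * snd d) = (t - s) * of_int N" .
      hence "\<bar>real_of_int (a * fst d + b * snd d)\<bar> = \<bar>t - s\<bar> * of_int N" using Npos by (simp add: abs_mult)
      also have "\<dots> < 1 * of_int N" using ts Npos by (intro mult_strict_right_mono) auto
      finally have "real_of_int \<bar>a * fst d + b * snd d\<bar> < real_of_int N" by (simp only: of_int_abs mult_1)
      hence "\<bar>a * fst d + b * snd d\<bar> < N" by (simp only: of_int_less_iff)
      moreover have "crs (a,b) d = 0" using c0 by simp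
      ultimately show ?thesis using True ed unfolding stest_def Let_def a_def b_def N_def
        by (simp add: crs_def)
    qed
  qed
qed

lemma smeet_bound:
  assumes m: "smeet p d q e" and d: "d \<in> set vecs" and e: "e \<in> set vecs"
  shows "fst q - fst p \<in> {-1,0,1} \<and> snd q - snd p \<in> {-1,0,1}"
proof -
  obtain t s :: real where ts: "0<t" "t<1" "0<s" "s<1"
    and e1: "of_int (fst p) + t * of_int (fst d) = of_int (fst q) + s * of_int (fst e)"
    and e2: "of_int (snd p) + t * of_int (snd d) = of_int (snd q) + s * of_int (snd e)"
    using m unfolding smeet_def by blast
  have ea: "of_int (fst q - fst p) = t * of_int (fst d) - s * of_int (fst e)" using e1 by simp
  have eb: "of_int (snd q - snd p) = t * of_int (snd d) - s * of_int (snd e)" using e2 by simp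
  have B: "-2 < real_of_int (fst q - fst p) \<and> real_of_int (fst q - fst p) < 2 \<and>
        -2 < real_of_int (snd q - snd p) \<and> real_of_int (snd q - snd p) < 2"
    unfolding ea eb using vecs_cases[OF d] vecs_cases[OF e] ts by (elim disjE) simp_all
  hence "-2 < fst q - fst p \<and> fst q - fst p < 2 \<and> -2 < snd q - snd p \<and> snd q - snd p < 2"
    by linarith
  thus ?thesis by auto
qed

lemma enum_facts:
  assumes c: "0 \<le> c" "c < 7" and d: "d \<in> set (T c)"
  shows "length (CL c d) \<le> 2" and "\<And>a b e. (a,b,e) \<in> set (CL c d) \<Longrightarrow> crs d e \<noteq> 0"
    and "\<And>a b e. a \<in> {-1,0,1} \<Longrightarrow> b \<in> {-1,0,1} \<Longrightarrow> e \<in> set (T ((c+a) mod 7)) \<Longrightarrow> stest (a,b) d e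
          \<Longrightarrow> (a,b,e) = (0,0,d) \<or> (a,b,e) \<in> set (CL c d)"
proof -
  have cs: "c \<in> set [0..6]" using c by simp
  have E: "length (CL c d) \<le> 2 \<and> list_all (\<lambda>(a,b,e). crs d e \<noteq> 0) (CL c d) \<and>
     list_all (\<lambda>a. list_all (\<lambda>b. list_all (\<lambda>e.
        stest (a,b) d e \<longrightarrow> ((a,b,e) = (0,0,d) \<or> (a,b,e) \<in> set (CL c d)))
      (T ((c + a) mod 7))) [-1,0,1]) [-1,0,1]"
    using enumcheck cs d unfolding enumcheck_def list_all_iff by blast
  show "length (CL c d) \<le> 2" using E by blast
  show "\<And>a b e. (a,b,e) \<in> set (CL c d) \<Longrightarrow> crs d e \<noteq> 0" using E unfolding list_all_iff by fastforce
  show "\<And>a b e. a \<in> {-1,0,1} \<Longrightarrow> b \<in> {-1,0,1} \<Longrightarrow> e \<in> set (T ((c+a) mod 7)) \<Longrightarrow> stest (a,b) d e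
          \<Longrightarrow> (a,b,e) = (0,0,d) \<or> (a,b,e) \<in> set (CL c d)"
  proof -
    fix a b e assume h: "a \<in> {-1,0,1}" "b \<in> {-1,0,1}" "e \<in> set (T ((c+a) mod 7))" "stest (a,b) d e"
    have "a \<in> set [-1,0,1]" "b \<in> set [-1,0,1]" using h by auto
    thus "(a,b,e) = (0,0,d) \<or> (a,b,e) \<in> set (CL c d)" using E h(3,4) unfolding list_all_iff by blast
  qed
qed

lemma PL:
  assumes d: "d \<in> set (T (x mod 7))" and e: "e \<in> set (T (x' mod 7))" and m: "smeet (x,y) d (x',y') e"
  shows "(x',y',e) = (x,y,d) \<or> (x'-x, y'-y, e) \<in> set (CL (x mod 7) d)"
proof -
  have dv: "d \<in> set vecs" using T_vecs d by blast
  have ev: "e \<in> set vecs" using T_vecs e by blast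
  have d0: "d \<noteq> (0,0)" using dv by (auto simp: vecs_def)
  have st: "stest (x'-x, y'-y) d e" using smeet_stest[OF m d0] by simp
  have bd: "x'-x \<in> {-1,0,1}" "y'-y \<in> {-1,0,1}" using smeet_bound[OF m dv ev] by auto
  have cm: "(x mod 7 + (x'-x)) mod 7 = x' mod 7" by (simp add: mod_add_left_eq)
  have "(x'-x, y'-y, e) = (0,0,d) \<or> (x'-x, y'-y, e) \<in> set (CL (x mod 7) d)"
    using enum_facts(3)[of "x mod 7" d "x'-x" "y'-y" e] d e bd st cm by simp
  thus ?thesis by auto
qed

definition DomA :: "(int \<times> int \<times> (int \<times> int)) set" where
  "DomA = {(x,y,d). 0 \<le> x \<and> 0 \<le> y \<and> y < 5 \<and> d \<in> set (T (x mod 7))}"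

definition edg :: "int \<times> int \<times> (int \<times> int) \<Rightarrow> nat set" where
  "edg t = (case t of (x,y,d) \<Rightarrow> {vid x y, vid (x + fst d) (y + snd d)})"

lemma vid_shift: "vid x (y + 5*k) = vid x y"
  by (simp add: vid_def)

lemma edg_shift: "edg (x, y + 5*k, d) = edg (x,y,d)"
proof -
  have "vid (x + fst d) (y + 5 * k + snd d) = vid (x + fst d) (y + snd d)"
    using vid_shift[of "x + fst d" "y + snd d" k] by (simp add: algebra_simps)
  thus ?thesis by (simp add: edg_def vid_shift)
qed

definition tstar :: "int \<times> int \<Rightarrow> int \<times> int \<times> (int \<times> int) \<Rightarrow> real" where
  "tstar d r = (case r of (a,b,e) \<Rightarrow> real_of_int (crs (a,b) e) / real_of_int (crs d e))"

definition Hm :: "int \<Rightarrow> int \<Rightarrow> int \<times> int \<Rightarrow> int \<times> int \<times> (int \<times> int) \<Rightarrow> nat set \<times> complex" where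
  "Hm x y d r = (case r of (a,b,e) \<Rightarrow> (edg (x+a, y+b, e),
      exp (Wr (of_int x + tstar d r * of_int (fst d)) (of_int y + tstar d r * of_int (snd d)))))"

lemma cross_main:
  assumes t1: "(x,y,d) \<in> DomA" and t2: "(x',y',e) \<in> DomA" and ne: "edg (x',y',e) \<noteq> edg (x,y,d)"
    and z1: "z \<in> curve_interior (crv (x,y,d))" and z2: "z \<in> curve_interior (crv (x',y',e))"
  shows "(edg (x',y',e), z) \<in> Hm x y d ` set (CL (x mod 7) d)"
proof -
  have d: "d \<in> set (T (x mod 7))" and e: "e \<in> set (T (x' mod 7))" and x0: "0 \<le> x"
    using t1 t2 by (auto simp: DomA_def)
  obtain t where t: "0<t" "t<1" and zt: "z = exp (Wr (of_int x + t * of_int (fst d)) (of_int y + t * of_int (snd d)))"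
    using z1 unfolding crv_int by blast
  obtain s where s: "0<s" "s<1" and zs: "z = exp (Wr (of_int x' + s * of_int (fst e)) (of_int y' + s * of_int (snd e)))"
    using z2 unfolding crv_int by blast
  obtain j::int where j1: "of_int x + t * of_int (fst d) = of_int x' + s * of_int (fst e)"
     and j2: "of_int y + t * of_int (snd d) = of_int y' + s * of_int (snd e) + 5 * of_int j"
    using zt zs exp_Wr_eq by metis
  have m: "smeet (x,y) d (x', y' + 5*j) e"
    unfolding smeet_def using t s j1 j2 by (intro exI[of _ t] exI[of _ s]) (simp add: algebra_simps)
  from PL[OF d e m] show ?thesis
  proof
    assume "(x', y' + 5 * j, e) = (x, y, d)"
    hence "edg (x', y' + 5 * j, e) = edg (x,y,d)" by simp
    thus ?thesis using ne edg_shift by metis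
  next
    assume r: "(x' - x, y' + 5 * j - y, e) \<in> set (CL (x mod 7) d)"
    have c: "0 \<le> x mod 7" "x mod 7 < 7" by simp_all
    have nz: "crs d e \<noteq> 0" using enum_facts(2)[OF c d r] .
    have ea: "of_int (x' - x) = t * of_int (fst d) - s * of_int (fst e)" using j1 by simp
    have eb: "of_int (y' + 5 * j - y) = t * of_int (snd d) - s * of_int (snd e)" using j2 by simp
    have "tstar d (x' - x, y' + 5 * j - y, e) = t"
      using meet_t(1)[OF ea eb] nz by (simp add: tstar_def)
    hence "Hm x y d (x' - x, y' + 5 * j - y, e) = (edg (x', y' + 5*j, e), z)"
      by (simp add: Hm_def zt)
    also have "\<dots> = (edg (x',y',e), z)" by (simp add: edg_shift)
    finally show ?thesis using r by (metis image_eqI)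
  qed
qed

definition rep :: "nat set \<Rightarrow> int \<times> int \<times> (int \<times> int)" where
  "rep e = (SOME t. t \<in> DomA \<and> edg t = e)"

definition cG :: "nat set \<Rightarrow> real \<Rightarrow> complex" where
  "cG e = crv (rep e)"

lemma rep_ok: "e \<in> edg ` DomA \<Longrightarrow> rep e \<in> DomA \<and> edg (rep e) = e"
  unfolding rep_def by (rule someI_ex) blast

lemma crossing_facts:
  assumes EA: "E \<subseteq> edg ` DomA" and fin: "finite E" and eE: "e \<in> E"
  shows "crossings_on_edge E cG e \<le> 2"
    and "\<And>f. f \<in> E \<Longrightarrow> f \<noteq> e \<Longrightarrow> finite (curve_interior (cG e) \<inter> curve_interior (cG f))"
proof -
  obtain x y d where r: "rep e = (x,y,d)" by (cases "rep e") auto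
  have rd: "(x,y,d) \<in> DomA" "edg (x,y,d) = e" using rep_ok[of e] eE EA r by auto
  define Hs where "Hs = Hm x y d ` set (CL (x mod 7) d)"
  have finH: "finite Hs" unfolding Hs_def by simp
  have cardH: "card Hs \<le> 2"
  proof -
    have "card Hs \<le> card (set (CL (x mod 7) d))" unfolding Hs_def by (rule card_image_le) simp
    also have "\<dots> \<le> length (CL (x mod 7) d)" by (rule card_length)
    also have "\<dots> \<le> 2" using enum_facts(1)[of "x mod 7" d] rd(1) by (simp add: DomA_def)
    finally show ?thesis .
  qed
  have key: "(f, z) \<in> Hs" if f: "f \<in> E" "f \<noteq> e" and z: "z \<in> curve_interior (cG e) \<inter> curve_interior (cG f)" for f z
  proof -
    obtain x' y' e' where r': "rep f = (x',y',e')" by (cases "rep f") auto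
    have rd': "(x',y',e') \<in> DomA" "edg (x',y',e') = f" using rep_ok[of f] f EA r' by auto
    have "(edg (x',y',e'), z) \<in> Hs" unfolding Hs_def
      by (rule cross_main[OF rd(1) rd'(1)]) (use rd rd' f z r r' in \<open>auto simp: cG_def\<close>)
    thus ?thesis using rd' by simp
  qed
  have sub: "curve_interior (cG e) \<inter> curve_interior (cG f) \<subseteq> snd ` Hs" if "f \<in> E" "f \<noteq> e" for f
    using key[OF that] by (metis image_eqI snd_conv subsetI)
  show "\<And>f. f \<in> E \<Longrightarrow> f \<noteq> e \<Longrightarrow> finite (curve_interior (cG e) \<inter> curve_interior (cG f))"
    using sub finH by (meson finite_imageI finite_subset)
  hence finB: "\<forall>f\<in>E - {e}. finite (curve_interior (cG e) \<inter> curve_interior (cG f))" by blast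
  have "crossings_on_edge E cG e = card (SIGMA f: E - {e}. curve_interior (cG e) \<inter> curve_interior (cG f))"
    unfolding crossings_on_edge_def using fin finB by simp
  also have "\<dots> \<le> card Hs"
    by (rule card_mono[OF finH]) (use key in auto)
  also have "\<dots> \<le> 2" by (rule cardH)
  finally show "crossings_on_edge E cG e \<le> 2" .
qed

definition co :: "nat \<Rightarrow> int \<times> int" where "co v = (int (v div 5), int (v mod 5))"

lemma co_inj: "co u = co v \<Longrightarrow> u = v"
  unfolding co_def by (metis div_mult_mod_eq of_nat_eq_iff prod.inject)

lemma vecs_fst: "d \<in> set vecs \<Longrightarrow> 0 \<le> fst d"
  by (auto simp: vecs_def)

lemma co_vid: "0 \<le> x \<Longrightarrow> co (vid x y) = (x, y mod 5)"
  unfolding co_def using vid_div vid_mod by simp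

definition N :: "int \<times> int \<Rightarrow> (int \<times> int) list" where
 "N p = (case p of (X,Y) \<Rightarrow> [(X + fst d, (Y + snd d) mod 5). d \<leftarrow> T (X mod 7)] @
     [(X - fst d, (Y - snd d) mod 5). d \<leftarrow> filter (\<lambda>d. d \<in> set (T ((X - fst d) mod 7))) vecs])"

definition girthcheck :: bool where
 "girthcheck = list_all (\<lambda>c. list_all (\<lambda>v1. list_all (\<lambda>v2. v2 \<noteq> (c,0) \<longrightarrow>
     ((c,0) \<notin> set (N v2) \<and> list_all (\<lambda>v3. v3 \<noteq> v1 \<and> v3 \<noteq> (c,0) \<longrightarrow> (c,0) \<notin> set (N v3)) (N v2)))
     (N v1)) (N (c,0))) [0..6]"

lemma girthcheck: girthcheck
  unfolding girthcheck_def by code_simp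

lemma adj_N1:
  assumes "(x,y,d) \<in> DomA"
  shows "co (vid (x + fst d) (y + snd d)) \<in> set (N (co (vid x y)))"
    and "co (vid x y) \<in> set (N (co (vid (x + fst d) (y + snd d))))"
proof -
  have x0: "0 \<le> x" and y: "0 \<le> y" "y < 5" and d: "d \<in> set (T (x mod 7))" using assms by (auto simp: DomA_def)
  have dv: "d \<in> set vecs" using T_vecs d by blast
  have x1: "0 \<le> x + fst d" using x0 vecs_fst[OF dv] by simp
  have c1: "co (vid x y) = (x, y)" using co_vid[OF x0] y by simp
  have c2: "co (vid (x + fst d) (y + snd d)) = (x + fst d, (y + snd d) mod 5)" using co_vid[OF x1] by simp
  show "co (vid (x + fst d) (y + snd d)) \<in> set (N (co (vid x y)))"
    unfolding c1 c2 N_def using d by auto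
  have m: "((y + snd d) mod 5 - snd d) mod 5 = y" using y by (simp add: mod_diff_left_eq)
  have "(x, y) \<in> set [(x + fst d - fst d', ((y + snd d) mod 5 - snd d') mod 5).
      d' \<leftarrow> filter (\<lambda>d'. d' \<in> set (T ((x + fst d - fst d') mod 7))) vecs]"
    using dv d m by (auto intro!: bexI[of _ d])
  thus "co (vid x y) \<in> set (N (co (vid (x + fst d) (y + snd d))))"
    unfolding c1 c2 N_def by simp
qed

lemma adj_N:
  assumes "{u,v} \<in> edg ` DomA" shows "co v \<in> set (N (co u))"
proof -
  obtain x y d where t: "(x,y,d) \<in> DomA" "{u,v} = edg (x,y,d)" using assms by auto
  hence "{u,v} = {vid x y, vid (x + fst d) (y + snd d)}" by (simp add: edg_def)
  hence "(u = vid x y \<and> v = vid (x + fst d) (y + snd d)) \<or> (v = vid x y \<and> u = vid (x + fst d) (y + snd d))"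
    by (metis doubleton_eq_iff)
  thus ?thesis using adj_N1[OF t(1)] by auto
qed

definition sh :: "int \<Rightarrow> int \<Rightarrow> int \<times> int \<Rightarrow> int \<times> int" where
  "sh k y0 p = (fst p - 7*k, (snd p - y0) mod 5)"

lemma N_mem: "q \<in> set (N (X,Y)) \<longleftrightarrow>
   (\<exists>d \<in> set (T (X mod 7)). q = (X + fst d, (Y + snd d) mod 5)) \<or>
   (\<exists>d \<in> set vecs. d \<in> set (T ((X - fst d) mod 7)) \<and> q = (X - fst d, (Y - snd d) mod 5))"
  unfolding N_def by auto

lemma N_shift: assumes "q \<in> set (N p)" shows "sh k y0 q \<in> set (N (sh k y0 p))"
proof -
  obtain X Y where p: "p = (X,Y)" by (cases p) auto
  have m7: "(X - 7*k - a) mod 7 = (X - a) mod 7" for a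
  proof -
    have "X - 7*k - a = (X - a) + 7*(-k)" by simp
    hence "(X - 7*k - a) mod 7 = ((X - a) + 7*(-k)) mod 7" by (rule arg_cong)
    also have "\<dots> = (X - a) mod 7" by (rule mod_mult_self2)
    finally show ?thesis .
  qed
  have m7': "(X - 7*k) mod 7 = X mod 7" using m7[of 0] by simp
  have sp: "sh k y0 p = (X - 7*k, (Y - y0) mod 5)" by (simp add: sh_def p)
  from assms[unfolded p N_mem] show ?thesis
  proof (elim disjE bexE conjE)
    fix d assume d: "d \<in> set (T (X mod 7))" and q: "q = (X + fst d, (Y + snd d) mod 5)"
    have "sh k y0 q = (X - 7*k + fst d, ((Y - y0) mod 5 + snd d) mod 5)"
      unfolding q sh_def by (simp add: mod_simps algebra_simps)
    moreover have "d \<in> set (T ((X - 7*k) mod 7))" using d m7' by simp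
    ultimately show ?thesis unfolding sp N_mem by blast
  next
    fix d assume d: "d \<in> set vecs" "d \<in> set (T ((X - fst d) mod 7))" and q: "q = (X - fst d, (Y - snd d) mod 5)"
    have "sh k y0 q = (X - 7*k - fst d, ((Y - y0) mod 5 - snd d) mod 5)"
      unfolding q sh_def by (simp add: mod_simps algebra_simps)
    moreover have "d \<in> set (T ((X - 7*k - fst d) mod 7))" using d m7 by simp
    ultimately show ?thesis unfolding sp N_mem using d by blast
  qed
qed

lemma sh_inj:
  assumes h: "sh k y0 (a,b) = sh k y0 (a',b')" and r: "0 \<le> b" "b < 5" "0 \<le> b'" "b' < 5"
  shows "a = a' \<and> b = b'"
proof -
  have 1: "a - 7*k = a' - 7*k" and 2: "(b - y0) mod 5 = (b' - y0) mod 5"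
    using h unfolding sh_def by simp_all
  have "b mod 5 = ((b - y0) mod 5 + y0) mod 5" by (simp add: mod_simps)
  also have "\<dots> = ((b' - y0) mod 5 + y0) mod 5" using 2 by simp
  also have "\<dots> = b' mod 5" by (simp add: mod_simps)
  finally have "b mod 5 = b' mod 5" .
  hence "b = b'" using r by simp
  thus ?thesis using 1 by simp
qed

lemma co_range: "0 \<le> snd (co u) \<and> snd (co u) < 5"
  unfolding co_def by simp

lemma sh_co_inj: assumes "sh k y0 (co u) = sh k y0 (co v)" shows "u = v"
proof -
  have "fst (co u) = fst (co v) \<and> snd (co u) = snd (co v)"
    using assms co_range[of u] co_range[of v] sh_inj[of k y0 "fst (co u)" "snd (co u)" "fst (co v)" "snd (co v)"]
    by simp
  hence "co u = co v" by (simp add: prod_eq_iff)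
  thus ?thesis by (rule co_inj)
qed

lemma sh_start0: "sh (a div 7) b (a,b) = (a mod 7, 0)"
  unfolding sh_def by (simp add: minus_mult_div_eq_mod)

lemma sh_start: "sh (fst (co u) div 7) (snd (co u)) (co u) = (fst (co u) mod 7, 0)"
  using sh_start0[of "fst (co u)" "snd (co u)"] by simp

lemma no_short_cycles:
  assumes EA: "E \<subseteq> edg ` DomA"
  shows "\<not> has_cycle_of_length V E 3" and "\<not> has_cycle_of_length V E 4"
proof -
  have adj: "co v \<in> set (N (co u))" if "{u,v} \<in> E" for u v using adj_N that EA by blast
  have gc: "\<And>c v1 v2. c \<in> set [0..6] \<Longrightarrow> v1 \<in> set (N (c,0)) \<Longrightarrow> v2 \<in> set (N v1) \<Longrightarrow> v2 \<noteq> (c,0) \<Longrightarrow>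
       (c,0) \<notin> set (N v2) \<and> (\<forall>v3 \<in> set (N v2). v3 \<noteq> v1 \<and> v3 \<noteq> (c,0) \<longrightarrow> (c,0) \<notin> set (N v3))"
  proof -
    fix c v1 v2 assume h: "c \<in> set [0..6]" "v1 \<in> set (N (c,0))" "v2 \<in> set (N v1)" "v2 \<noteq> (c,0)"
    have "\<forall>c\<in>set [0..6]. \<forall>v1\<in>set (N (c,0)). \<forall>v2\<in>set (N v1). v2 \<noteq> (c,0) \<longrightarrow>
     ((c,0) \<notin> set (N v2) \<and> (\<forall>v3\<in>set (N v2). v3 \<noteq> v1 \<and> v3 \<noteq> (c,0) \<longrightarrow> (c,0) \<notin> set (N v3)))"
      using girthcheck unfolding girthcheck_def list_all_iff .
    thus "(c,0) \<notin> set (N v2) \<and> (\<forall>v3 \<in> set (N v2). v3 \<noteq> v1 \<and> v3 \<noteq> (c,0) \<longrightarrow> (c,0) \<notin> set (N v3))"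
      using h by blast
  qed
  show "\<not> has_cycle_of_length V E 3"
  proof
    assume "has_cycle_of_length V E 3"
    then obtain xs where xs: "length xs = 3" "distinct xs" "\<forall>i<3. {xs ! i, xs ! ((i + 1) mod 3)} \<in> E"
      unfolding has_cycle_of_length_def by blast
    define P where "P u = sh (fst (co (xs!0)) div 7) (snd (co (xs!0))) (co u)" for u
    define c where "c = fst (co (xs!0)) mod 7"
    have P0: "P (xs!0) = (c,0)" unfolding P_def c_def by (rule sh_start)
    have h: "\<And>i. i < 3 \<Longrightarrow> {xs ! i, xs ! ((i + 1) mod 3)} \<in> E" using xs(3) by blast
    have e: "{xs!0, xs!1} \<in> E" "{xs!1, xs!2} \<in> E" "{xs!2, xs!0} \<in> E"
      using h[of 0] h[of 1] h[of 2] by (simp_all add: numeral_2_eq_2)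
    have a1: "P (xs!1) \<in> set (N (P (xs!0)))" unfolding P_def by (rule N_shift, rule adj, rule e(1))
    have a2: "P (xs!2) \<in> set (N (P (xs!1)))" unfolding P_def by (rule N_shift, rule adj, rule e(2))
    have a3: "P (xs!0) \<in> set (N (P (xs!2)))" unfolding P_def by (rule N_shift, rule adj, rule e(3))
    have d02: "xs!2 \<noteq> xs!0" using xs(1,2) by (simp add: nth_eq_iff_index_eq)
    have "P (xs!2) \<noteq> P (xs!0)" using d02 sh_co_inj unfolding P_def by blast
    moreover have "c \<in> set [0..6]" unfolding c_def by simp
    ultimately have "(c,0) \<notin> set (N (P (xs!2)))"
      using gc[of c "P (xs!1)" "P (xs!2)"] a1 a2 P0 by simp
    thus False using a3 P0 by simp
  qed
  show "\<not> has_cycle_of_length V E 4"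
  proof
    assume "has_cycle_of_length V E 4"
    then obtain xs where xs: "length xs = 4" "distinct xs" "\<forall>i<4. {xs ! i, xs ! ((i + 1) mod 4)} \<in> E"
      unfolding has_cycle_of_length_def by blast
    define P where "P u = sh (fst (co (xs!0)) div 7) (snd (co (xs!0))) (co u)" for u
    define c where "c = fst (co (xs!0)) mod 7"
    have P0: "P (xs!0) = (c,0)" unfolding P_def c_def by (rule sh_start)
    have h: "\<And>i. i < 4 \<Longrightarrow> {xs ! i, xs ! ((i + 1) mod 4)} \<in> E" using xs(3) by blast
    have e: "{xs!0, xs!1} \<in> E" "{xs!1, xs!2} \<in> E" "{xs!2, xs!3} \<in> E" "{xs!3, xs!0} \<in> E"
    proof -
      show "{xs!0, xs!1} \<in> E" using h[of 0] by simp
      show "{xs!1, xs!2} \<in> E" using h[of 1] by (simp add: numeral_2_eq_2)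
      show "{xs!2, xs!3} \<in> E" using h[of 2] by simp
      show "{xs!3, xs!0} \<in> E" using h[of 3] by simp
    qed
    have a1: "P (xs!1) \<in> set (N (P (xs!0)))" unfolding P_def by (rule N_shift, rule adj, rule e(1))
    have a2: "P (xs!2) \<in> set (N (P (xs!1)))" unfolding P_def by (rule N_shift, rule adj, rule e(2))
    have a3: "P (xs!3) \<in> set (N (P (xs!2)))" unfolding P_def by (rule N_shift, rule adj, rule e(3))
    have a4: "P (xs!0) \<in> set (N (P (xs!3)))" unfolding P_def by (rule N_shift, rule adj, rule e(4))
    have "xs!2 \<noteq> xs!0" "xs!3 \<noteq> xs!1" "xs!3 \<noteq> xs!0" using xs(1,2) by (simp_all add: nth_eq_iff_index_eq)
    hence "P (xs!2) \<noteq> P (xs!0)" "P (xs!3) \<noteq> P (xs!1)" "P (xs!3) \<noteq> P (xs!0)"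
      using sh_co_inj unfolding P_def by blast+
    moreover have "c \<in> set [0..6]" unfolding c_def by simp
    ultimately have "\<forall>v3 \<in> set (N (P (xs!2))). v3 \<noteq> P (xs!1) \<and> v3 \<noteq> (c,0) \<longrightarrow> (c,0) \<notin> set (N v3)"
      using gc[of c "P (xs!1)" "P (xs!2)"] a1 a2 P0 by simp
    hence "(c,0) \<notin> set (N (P (xs!3)))" using a3 \<open>P (xs!3) \<noteq> P (xs!1)\<close> \<open>P (xs!3) \<noteq> P (xs!0)\<close> P0
      by simp
    thus False using a4 P0 by simp
  qed
qed

lemma vec_eq_helper:
  assumes d: "d \<in> set vecs" and d': "d' \<in> set vecs" and f: "fst d = fst d'"
    and m: "(y + snd d) mod 5 = (y + snd d') mod 5"
  shows "d = d'"
  using vecs_cases[OF d] vecs_cases[OF d'] f m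
  by (elim disjE) (simp_all, presburger+)

lemma edg_co:
  assumes "(x,y,d) \<in> DomA"
  shows "co ` edg (x,y,d) = {(x,y), (x + fst d, (y + snd d) mod 5)}"
proof -
  have x0: "0 \<le> x" and y: "0 \<le> y" "y < 5" and d: "d \<in> set (T (x mod 7))" using assms by (auto simp: DomA_def)
  have dv: "d \<in> set vecs" using T_vecs d by blast
  have x1: "0 \<le> x + fst d" using x0 vecs_fst[OF dv] by simp
  have c1: "co (vid x y) = (x, y)" using co_vid[OF x0] y by simp
  have c2: "co (vid (x + fst d) (y + snd d)) = (x + fst d, (y + snd d) mod 5)" using co_vid[OF x1] by simp
  show ?thesis unfolding edg_def using c1 c2 by simp
qed

lemma inj_edg: "inj_on edg DomA"
proof (rule inj_onI)
  fix t t' assume t: "t \<in> DomA" and t': "t' \<in> DomA" and eq: "edg t = edg t'"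
  obtain x y d where tt: "t = (x,y,d)" by (cases t) auto
  obtain x' y' d' where tt': "t' = (x',y',d')" by (cases t') auto
  have y: "0 \<le> y" "y < 5" "0 \<le> y'" "y' < 5" using t t' tt tt' by (auto simp: DomA_def)
  have dT: "d \<in> set (T (x mod 7))" "d' \<in> set (T (x' mod 7))" using t t' tt tt' by (auto simp: DomA_def)
  have dv: "d \<in> set vecs" "d' \<in> set vecs" using T_vecs dT by blast+
  have "{(x,y), (x + fst d, (y + snd d) mod 5)} = {(x',y'), (x' + fst d', (y' + snd d') mod 5)}"
    using edg_co[of x y d] edg_co[of x' y' d'] t t' tt tt' eq by simp
  hence "((x,y) = (x',y') \<and> (x + fst d, (y + snd d) mod 5) = (x' + fst d', (y' + snd d') mod 5)) \<or>
         ((x,y) = (x' + fst d', (y' + snd d') mod 5) \<and> (x + fst d, (y + snd d) mod 5) = (x',y'))"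
    by (simp add: doubleton_eq_iff)
  thus "t = t'"
  proof
    assume h: "(x,y) = (x',y') \<and> (x + fst d, (y + snd d) mod 5) = (x' + fst d', (y' + snd d') mod 5)"
    hence "d = d'" using vec_eq_helper[OF dv] by auto
    thus ?thesis using h tt tt' by simp
  next
    assume h: "(x,y) = (x' + fst d', (y' + snd d') mod 5) \<and> (x + fst d, (y + snd d) mod 5) = (x',y')"
    have "fst d = 0" "fst d' = 0" using h vecs_fst[OF dv(1)] vecs_fst[OF dv(2)] by auto
    hence "d = (0,1)" "d' = (0,1)" using vecs_cases[OF dv(1)] vecs_cases[OF dv(2)] by auto
    hence "y = (y' + 1) mod 5" "y' = (y + 1) mod 5" using h by auto
    hence False using y by presburger
    thus ?thesis ..
  qed
qed

definition Dp :: "nat \<Rightarrow> (int \<times> int \<times> (int \<times> int)) set" where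
  "Dp m = {(x,y,d). 0 \<le> x \<and> x < 7 * int m \<and> 0 \<le> y \<and> y < 5 \<and> d \<in> set (T (x mod 7))}"

definition L0 :: "(int \<times> int \<times> (int \<times> int)) list" where
  "L0 = concat (map (\<lambda>c. concat (map (\<lambda>y. map (\<lambda>d. (c,y,d)) (T c)) [0..4])) [0..6])"

lemma L0_facts: "distinct L0 \<and> length L0 = 80"
  unfolding L0_def by code_simp

definition B0 :: "(int \<times> int \<times> (int \<times> int)) set" where
  "B0 = {(c,y,d). 0 \<le> c \<and> c < 7 \<and> 0 \<le> y \<and> y < 5 \<and> d \<in> set (T c)}"

lemma B0_card: "card B0 = 80"
proof -
  have "B0 = set L0" unfolding B0_def L0_def by force
  thus ?thesis using L0_facts distinct_card by metis
qed

lemma Dp_finite: "finite (Dp m)"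
proof -
  have "Dp m \<subseteq> {0..7 * int m} \<times> {0..4} \<times> set vecs"
    unfolding Dp_def using T_vecs by auto
  thus ?thesis by (rule finite_subset) simp
qed

lemma Dp_card: "card (Dp m) = 80 * m"
proof (induction m)
  case 0
  have "Dp 0 = {}" unfolding Dp_def by auto
  thus ?case by simp
next
  case (Suc m)
  define Bl where "Bl = (\<lambda>(c,y,d). (7 * int m + c, y, d)) ` B0"
  have "Dp (Suc m) = Dp m \<union> Bl"
  proof (rule set_eqI)
    fix t :: "int \<times> int \<times> (int \<times> int)"
    obtain x y d where t: "t = (x,y,d)" by (cases t) auto
    have "t \<in> Bl \<longleftrightarrow> 7 * int m \<le> x \<and> x < 7 * int m + 7 \<and> 0 \<le> y \<and> y < 5 \<and> d \<in> set (T (x mod 7))"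
    proof
      assume "t \<in> Bl"
      then obtain c where c: "0 \<le> c" "c < 7" "0 \<le> y" "y < 5" "d \<in> set (T c)" "x = 7 * int m + c"
        unfolding Bl_def B0_def t by auto
      have "x mod 7 = c" using c by simp
      thus "7 * int m \<le> x \<and> x < 7 * int m + 7 \<and> 0 \<le> y \<and> y < 5 \<and> d \<in> set (T (x mod 7))" using c by simp
    next
      assume h: "7 * int m \<le> x \<and> x < 7 * int m + 7 \<and> 0 \<le> y \<and> y < 5 \<and> d \<in> set (T (x mod 7))"
      define c where "c = x - 7 * int m"
      have c: "0 \<le> c" "c < 7" using h unfolding c_def by simp_all
      have "x mod 7 = (c + 7 * int m) mod 7" unfolding c_def by simp
      also have "\<dots> = c mod 7" by (rule mod_mult_self2)
      also have "\<dots> = c" using c by simp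
      finally have cm: "x mod 7 = c" .
      have "(c, y, d) \<in> B0" using c h cm unfolding B0_def by simp
      moreover have "t = (\<lambda>(c,y,d). (7 * int m + c, y, d)) (c,y,d)" unfolding t c_def by simp
      ultimately show "t \<in> Bl" unfolding Bl_def by blast
    qed
    thus "t \<in> Dp (Suc m) \<longleftrightarrow> t \<in> Dp m \<union> Bl" unfolding Dp_def t by auto
  qed
  moreover have "Dp m \<inter> Bl = {}"
    unfolding Dp_def Bl_def B0_def by auto
  moreover have "card Bl = 80"
  proof -
    have "inj_on (\<lambda>(c,y,d). (7 * int m + c, y, d)) B0" by (rule inj_onI) auto
    hence "card Bl = card B0" unfolding Bl_def by (rule card_image)
    thus ?thesis using B0_card by simp
  qed
  moreover have "finite Bl"
  proof -
    have "finite B0" using B0_card card_ge_0_finite by (metis zero_less_numeral)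
    thus ?thesis unfolding Bl_def by (rule finite_imageI)
  qed
  ultimately show ?case using Suc Dp_finite[of m] by (simp add: card_Un_disjoint)
qed

lemma pos_inj: assumes "pos u = pos v" shows "u = v"
proof -
  obtain j::int where a: "real (u div 5) = real (v div 5)" and b: "real (u mod 5) = real (v mod 5) + 5 * of_int j"
    using assms unfolding pos_def exp_Wr_eq by blast
  have "u mod 5 < 5" "v mod 5 < 5" by simp_all
  hence "-1 < real_of_int j \<and> real_of_int j < 1" using b by linarith
  hence "j = 0" by (intro int_small) linarith
  hence "u mod 5 = v mod 5" using b by simp
  moreover have "u div 5 = v div 5" using a by simp
  ultimately show ?thesis by (metis div_mult_mod_eq)
qed

lemma crv_start: "pathstart (crv (x,y,d)) = exp (Wr (of_int x) (of_int y))"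
  unfolding pathstart_def crv_pt by simp

lemma crv_finish: "pathfinish (crv (x,y,d)) = exp (Wr (of_int (x + fst d)) (of_int (y + snd d)))"
  unfolding pathfinish_def crv_pt by simp

definition DomL :: "int \<Rightarrow> (int \<times> int \<times> (int \<times> int)) set" where
  "DomL L = {(x,y,d). 0 \<le> x \<and> x + fst d < L \<and> 0 \<le> y \<and> y < 5 \<and> d \<in> set (T (x mod 7))}"

lemma DomL_sub: "DomL L \<subseteq> DomA"
  unfolding DomL_def DomA_def by auto

lemma vid_less: assumes "0 \<le> x" "x < L" "5 * L \<le> int n" shows "vid x y < n"
proof -
  have "int (vid x y) = 5*x + y mod 5" using vid_int assms by simp
  also have "\<dots> < 5 * x + 5" by simp
  also have "\<dots> \<le> 5 * L" using assms by simp
  finally show ?thesis using assms by simp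
qed

lemma edg_props:
  assumes t: "(x,y,d) \<in> DomL L" and n: "5 * L \<le> int n"
  shows "edg (x,y,d) \<subseteq> {..<n}" and "card (edg (x,y,d)) = 2"
proof -
  have x0: "0 \<le> x" and xl: "x + fst d < L" and y: "0 \<le> y" "y < 5" and d: "d \<in> set (T (x mod 7))"
    using t by (auto simp: DomL_def)
  have dv: "d \<in> set vecs" using T_vecs d by blast
  have f0: "0 \<le> fst d" using vecs_fst[OF dv] .
  show "edg (x,y,d) \<subseteq> {..<n}"
    unfolding edg_def using vid_less[OF x0 _ n, of y] vid_less[of "x + fst d" L n "y + snd d"] x0 xl f0 n by auto
  have "vid x y \<noteq> vid (x + fst d) (y + snd d)"
  proof
    assume h: "vid x y = vid (x + fst d) (y + snd d)"
    have "co (vid x y) = (x, y)" using co_vid[OF x0] y by simp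
    moreover have "co (vid (x + fst d) (y + snd d)) = (x + fst d, (y + snd d) mod 5)"
      using co_vid x0 f0 by simp
    ultimately have "x = x + fst d" "y = (y + snd d) mod 5" using h by auto
    hence "d = (0,1)" "y = (y + 1) mod 5" using vecs_cases[OF dv] by auto
    thus False using y by presburger
  qed
  thus "card (edg (x,y,d)) = 2" unfolding edg_def by simp
qed

theorem theorem17:
  shows "\<exists>C::real. \<exists>N::nat. \<forall>n\<ge>N. \<exists>(V::nat set) E.
           simple_graph V E \<and> card V = n \<and> k_planar 2 V E \<and> girth V E = 5 \<and>
           real (card E) \<ge> (2 + 2/7) * real n - C"
proof (rule exI[of _ "160::real"], rule exI[of _ "35::nat"], intro allI impI)
  fix n :: nat assume n35: "35 \<le> n"
  define q where "q = n div 35"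
  have q1: "1 \<le> q" using n35 unfolding q_def by simp
  have qn: "35 * q \<le> n" "n < 35 * (q + 1)" unfolding q_def by simp_all
  define L where "L = 7 * int q"
  have L5: "5 * L \<le> int n" using qn unfolding L_def by simp
  define V where "V = {..<n}"
  define E where "E = edg ` DomL L"
  have EA: "E \<subseteq> edg ` DomA" unfolding E_def using DomL_sub by blast
  have Esub: "e \<subseteq> V \<and> card e = 2" if eE0: "e \<in> E" for e
  proof -
    obtain t where t: "t \<in> DomL L" "e = edg t" using eE0 unfolding E_def by blast
    obtain x y d where "t = (x,y,d)" by (rule prod_cases3)
    hence "(x,y,d) \<in> DomL L" "e = edg (x,y,d)" using t by simp_all
    thus ?thesis using edg_props[OF _ L5] unfolding V_def by blast
  qed
  have finE: "finite E"
  proof -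
    have "E \<subseteq> Pow V" using Esub by blast
    thus ?thesis unfolding V_def by (rule finite_subset) simp
  qed
  have sg: "simple_graph V E" unfolding simple_graph_def V_def using Esub V_def by simp
  have cV: "card V = n" unfolding V_def by simp
  have kp: "k_planar 2 V E"
    unfolding k_planar_def
  proof (intro exI conjI)
    show "drawing V E pos cG" unfolding drawing_def
    proof (intro conjI ballI impI)
      show "inj_on pos V" by (rule inj_onI) (rule pos_inj)
      fix e assume eE: "e \<in> E"
      obtain x y d where r: "rep e = (x,y,d)" by (cases "rep e") auto
      have rd: "(x,y,d) \<in> DomA" "edg (x,y,d) = e" using rep_ok[of e] eE EA r by auto
      have x0: "0 \<le> x" and d: "d \<in> set (T (x mod 7))" using rd by (auto simp: DomA_def)
      have dv: "d \<in> set vecs" using T_vecs d by blast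
      have x1: "0 \<le> x + fst d" using x0 vecs_fst[OF dv] by simp
      have cg: "cG e = crv (x,y,d)" by (simp add: cG_def r)
      show "arc (cG e)" unfolding cg by (rule arc_crv[OF dv])
      have ps: "pathstart (cG e) = pos (vid x y)" unfolding cg crv_start using pos_vid[OF x0, of y] by simp
      have pf: "pathfinish (cG e) = pos (vid (x + fst d) (y + snd d))"
        unfolding cg crv_finish using pos_vid[OF x1, of "y + snd d"] by simp
      have pe: "pos ` e = {pos (vid x y), pos (vid (x + fst d) (y + snd d))}"
        using rd(2) by (auto simp: edg_def)
      show "{pathstart (cG e), pathfinish (cG e)} = pos ` e"
        unfolding ps pf pe ..
      show "pos ` V \<inter> curve_interior (cG e) = {}"
        unfolding cg using vert_avoid[OF dv] by blast
    next
      fix e f assume "e \<in> E" "f \<in> E" "e \<noteq> f"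
      thus "finite (curve_interior (cG e) \<inter> curve_interior (cG f))"
        using crossing_facts(2)[OF EA finE] by blast
    qed
    show "\<forall>e\<in>E. crossings_on_edge E cG e \<le> 2"
      using crossing_facts(1)[OF EA finE] by blast
  qed
  have L7: "7 \<le> L" unfolding L_def using q1 by simp
  have inE: "\<And>x y d. (x,y,d) \<in> DomL L \<Longrightarrow> edg (x,y,d) \<in> E" unfolding E_def by blast
  have mem: "\<And>x y d. 0 \<le> x \<Longrightarrow> x + fst d < L \<Longrightarrow> 0 \<le> y \<Longrightarrow> y < 5 \<Longrightarrow> d \<in> set (T (x mod 7)) \<Longrightarrow> (x,y,d) \<in> DomL L"
    unfolding DomL_def by simp
  have E1: "{0,1} \<in> E"
  proof -
    have "edg (0,0,(0,1)) \<in> E" using L7 by (intro inE mem) (simp_all add: T_def)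
    thus ?thesis by (simp add: edg_def vid_def)
  qed
  have E2: "{1,5} \<in> E"
  proof -
    have "edg (0,1,(1,-1)) \<in> E" using L7 by (intro inE mem) (simp_all add: T_def)
    thus ?thesis by (simp add: edg_def vid_def)
  qed
  have E3: "{5,14} \<in> E"
  proof -
    have "edg (1,0,(1,-1)) \<in> E" using L7 by (intro inE mem) (simp_all add: T_def)
    thus ?thesis by (simp add: edg_def vid_def)
  qed
  have E4: "{14,9} \<in> E"
  proof -
    have "edg (1,4,(1,0)) \<in> E" using L7 by (intro inE mem) (simp_all add: T_def)
    thus ?thesis by (simp add: edg_def vid_def insert_commute)
  qed
  have E5: "{9,0} \<in> E"
  proof -
    have "edg (0,0,(1,-1)) \<in> E" using L7 by (intro inE mem) (simp_all add: T_def)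
    thus ?thesis by (simp add: edg_def vid_def insert_commute)
  qed
  have c5: "has_cycle_of_length V E 5"
    unfolding has_cycle_of_length_def
  proof (intro conjI exI[of _ "[0,1,5,14,9]"])
    show "set [0,1,5,14,9] \<subseteq> V" unfolding V_def using n35 by auto
    show "\<forall>i<5. {[0,1,5,14,9::nat] ! i, [0,1,5,14,9] ! ((i + 1) mod 5)} \<in> E"
    proof (intro allI impI)
      fix i :: nat assume "i < 5"
      hence "i = 0 \<or> i = 1 \<or> i = 2 \<or> i = 3 \<or> i = 4" by presburger
      thus "{[0,1,5,14,9::nat] ! i, [0,1,5,14,9] ! ((i + 1) mod 5)} \<in> E"
        using E1 E2 E3 E4 E5 by (elim disjE) simp_all
    qed
  qed simp_all
  have g5: "girth V E = 5"
  proof -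
    have le: "5 \<le> k" if "has_cycle_of_length V E k" for k
    proof -
      have "3 \<le> k" using that unfolding has_cycle_of_length_def by simp
      moreover have "k \<noteq> 3" "k \<noteq> 4" using that no_short_cycles[OF EA, of V] by auto
      ultimately show ?thesis by simp
    qed
    have "(LEAST k. has_cycle_of_length V E k) = 5"
      by (rule Least_equality[where P="\<lambda>k. has_cycle_of_length V E k", OF c5 le])
    thus ?thesis unfolding girth_def using c5 by (auto simp: numeral_eq_enat)
  qed
  have sub: "Dp (q - 1) \<subseteq> DomL L"
  proof
    fix t assume t: "t \<in> Dp (q - 1)"
    obtain x y d where tt: "t = (x,y,d)" by (cases t) auto
    have h: "0 \<le> x" "x < 7 * int (q - 1)" "0 \<le> y" "y < 5" "d \<in> set (T (x mod 7))"
      using t tt by (auto simp: Dp_def)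
    have "fst d \<le> 2" using vecs_cases[OF T_vecs[OF h(5)]] by auto
    moreover have "7 * int (q - 1) + 7 = L" unfolding L_def using q1 by (simp add: algebra_simps of_nat_diff)
    ultimately have "x + fst d < L" using h by linarith
    thus "t \<in> DomL L" using h tt by (simp add: DomL_def)
  qed
  have "card (Dp (q - 1)) = card (edg ` Dp (q - 1))"
    by (rule card_image[symmetric], rule inj_on_subset[OF inj_edg]) (use sub DomL_sub in blast)
  also have "\<dots> \<le> card E" unfolding E_def
    by (rule card_mono) (use finE E_def sub in auto)
  finally have cE: "80 * (q - 1) \<le> card E" using Dp_card by simp
  have "real (80 * (q - 1)) = 80 * real q - 80" using q1 by (simp add: of_nat_diff)
  hence "80 * real q - 80 \<le> real (card E)" using cE by (metis of_nat_le_iff)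
  moreover have "real n < 35 * real q + 35"
  proof -
    have "real n < real (35 * (q + 1))" using qn(2) by (simp only: of_nat_less_iff)
    thus ?thesis by simp
  qed
  moreover have "(2 + 2/7) * real n = 16/7 * real n" by simp
  ultimately have cnt: "(2 + 2/7) * real n - 160 \<le> real (card E)" by linarith
  show "\<exists>(V::nat set) E. simple_graph V E \<and> card V = n \<and> k_planar 2 V E \<and> girth V E = 5 \<and>
           real (card E) \<ge> (2 + 2/7) * real n - 160"
    using sg cV kp g5 cnt by blast
qed

end
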